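(* Let $\mathcal{C}$ be a linear $[n,k]$ code over a finite field $\mathbb{F}_q$ with all-symbol locality $r$, whose distinct recovery sets are $L_1,\dots,L_m$, and suppose $\mathcal{C}$ is a PMR code with respect to the admissible puncturing pattern $e=\{e_1,\dots,e_m\}$. After reordering coordinates so that $e_i=i$ for $i=1,\dots,m$, and writing $k_0=n-m$ and $\Delta=n-k-m$, the code $\mathcal{C}$ has a parity-check matrix of the form $$H=\begin{bmatrix} I_m & F\\ 0 & H_{\mathrm{MDS}}\end{bmatrix},$$ where $F$ is an $m\times k_0$ matrix, $H_{\mathrm{MDS}}$ is a $\Delta\times k_0$ matrix that is a parity-check matrix of a $[k_0,k_0-\Delta]$ MDS code, and the $i$-th row $\underline{x}_i^t$ of $F$ has Hamming weight at most $r$ for every $i=1,\dots,m$.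
   Context: An $[n,k]$ linear code $\mathcal{C}$ has all-symbol locality $r$ if for every coordinate $i\in[n]$ the dual code $\mathcal{C}^\perp$ contains a codeword whose support $L_i$ satisfies $i\in L_i$ and $|L_i|\le r+1$; $L_i$ is the recovery set of coordinate $i$, and it is assumed that $L_i\not\subset\bigcup_{j\ne i}L_j$. Such a code with minimum distance $d$ is said to be optimal if $d=(n-k+1)-(\lceil k/r\rceil-1)$. With distinct recovery sets $L_1,\dots,L_m$, a set $e=\{e_1,\dots,e_m\}$ is an admissible puncturing pattern if $e_i\in L_i\setminus\bigcup_{j\in[m],j\neq i}L_j$ for all $i$. A PMR (partially maximally recoverable) code is an optimal all-symbol locality code which becomes an MDS code upon puncturing the coordinates of some admissible puncturing pattern. *)

theory Defs
  imports "Jordan_Normal_Form.VS_Connect"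
begin

text \<open>Vectors of length n over a field are elements of carrier_vec n (coordinates 0..n-1).\<close>

definition hweight :: "'a::zero vec \<Rightarrow> nat" where
  "hweight x = card {i. i < dim_vec x \<and> x $ i \<noteq> 0}"

definition vsupp :: "'a::zero vec \<Rightarrow> nat set" where
  "vsupp x = {i. i < dim_vec x \<and> x $ i \<noteq> 0}"

definition linear_code :: "'a::field vec set \<Rightarrow> nat \<Rightarrow> nat \<Rightarrow> bool" where
  "linear_code C n k \<longleftrightarrow>
     subspace class_ring C (module_vec TYPE('a) n) \<and>
     vectorspace.dim class_ring ((module_vec TYPE('a) n)\<lparr>carrier := C\<rparr>) = k"

definition min_dist :: "'a::field vec set \<Rightarrow> nat" where
  "min_dist C = Min (hweight ` {c \<in> C. c \<noteq> 0\<^sub>v (dim_vec c)})"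

definition dual_code :: "nat \<Rightarrow> 'a::field vec set \<Rightarrow> 'a vec set" where
  "dual_code n C = {y \<in> carrier_vec n. \<forall>c \<in> C. y \<bullet> c = 0}"

definition MDS_code :: "'a::field vec set \<Rightarrow> nat \<Rightarrow> nat \<Rightarrow> bool" where
  "MDS_code C n k \<longleftrightarrow> linear_code C n k \<and> min_dist C = n - k + 1"

definition parity_check :: "'a::field mat \<Rightarrow> nat \<Rightarrow> 'a vec set \<Rightarrow> bool" where
  "parity_check H n C \<longleftrightarrow> dim_col H = n \<and>
     C = {c \<in> carrier_vec n. H *\<^sub>v c = 0\<^sub>v (dim_row H)}"

definition puncture_first :: "nat \<Rightarrow> nat \<Rightarrow> 'a vec set \<Rightarrow> 'a vec set" where
  "puncture_first n m C = (\<lambda>c. vec (n - m) (\<lambda>j. c $ (j + m))) ` C"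

text \<open>All-symbol locality r with recovery sets: Rec i is the recovery set of coordinate i,
  the support of a dual codeword, containing i, of size at most r+1; the distinct recovery sets
  are L 0, ..., L (m-1), and none is covered by the union of the others.\<close>
definition locality_with :: "'a::field vec set \<Rightarrow> nat \<Rightarrow> nat \<Rightarrow> (nat \<Rightarrow> nat set)
    \<Rightarrow> nat \<Rightarrow> (nat \<Rightarrow> nat set) \<Rightarrow> bool" where
  "locality_with C n r Rec m L \<longleftrightarrow>
     (\<forall>i<n. (\<exists>y \<in> dual_code n C. vsupp y = Rec i) \<and> i \<in> Rec i \<and> card (Rec i) \<le> r + 1) \<and>
     inj_on L {..<m} \<and> L ` {..<m} = Rec ` {..<n} \<and>
     (\<forall>i<m. \<not> L i \<subseteq> (\<Union>j \<in> {..<m} - {i}. L j))"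

definition optimal_LRC :: "'a::field vec set \<Rightarrow> nat \<Rightarrow> nat \<Rightarrow> nat \<Rightarrow> bool" where
  "optimal_LRC C n k r \<longleftrightarrow>
     int (min_dist C) = (int n - int k + 1) - (\<lceil>real k / real r\<rceil> - 1)"

definition admissible_pattern :: "nat \<Rightarrow> (nat \<Rightarrow> nat set) \<Rightarrow> (nat \<Rightarrow> nat) \<Rightarrow> bool" where
  "admissible_pattern m L e \<longleftrightarrow>
     (\<forall>i<m. e i \<in> L i - (\<Union>j \<in> {..<m} - {i}. L j))"

end

theory Submission
  imports Defs "Jordan_Normal_Form.DL_Rank"
begin


lemma finite_carrier_vec': "finite (carrier_vec n :: 'a::finite vec set)"
proof -
  have "carrier_vec n \<subseteq> vec_of_list ` {xs :: 'a list. set xs \<subseteq> UNIV \<and> length xs = n}"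
  proof
    fix v :: "'a vec" assume "v \<in> carrier_vec n"
    then show "v \<in> vec_of_list ` {xs. set xs \<subseteq> UNIV \<and> length xs = n}"
      by (intro image_eqI[of _ _ "list_of_vec v"]) (auto simp: vec_list)
  qed
  moreover have "finite {xs :: 'a list. set xs \<subseteq> UNIV \<and> length xs = n}"
    by (rule finite_lists_length_eq) simp
  ultimately show ?thesis by (meson finite_imageI finite_subset)
qed

lemma fin_dim_of_finite:
  assumes "vectorspace K V" "finite (carrier V)"
  shows "vectorspace.fin_dim K V"
proof -
  interpret vectorspace K V by fact
  show ?thesis unfolding fin_dim_def
    using in_own_span[of "carrier V"] span_is_subset2[of "carrier V"] assms(2) by auto
qed

lemma sub_vs:
  fixes S :: "'a::field vec set"
  assumes "subspace class_ring S (module_vec TYPE('a) n)"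
  shows "vectorspace class_ring ((module_vec TYPE('a) n)\<lparr>carrier := S\<rparr>)"
  using vectorspace.subspace_is_vs[OF vec_vs assms] .

lemma sub_carrier:
  fixes S :: "'a::field vec set"
  assumes "subspace class_ring S (module_vec TYPE('a) n)"
  shows "S \<subseteq> carrier_vec n"
  using assms unfolding subspace_def submodule_def by (auto simp: module_vec_simps)

lemma sub_fin_dim:
  fixes S :: "'a::{finite,field} vec set"
  assumes "subspace class_ring S (module_vec TYPE('a) n)"
  shows "vectorspace.fin_dim class_ring ((module_vec TYPE('a) n)\<lparr>carrier := S\<rparr>)"
  apply (rule fin_dim_of_finite[OF sub_vs[OF assms]])
  using sub_carrier[OF assms] finite_carrier_vec'[where n=n and 'a='a]
  by (auto intro: finite_subset)

lemma sub_dim_le: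
  fixes S :: "'a::{finite,field} vec set"
  assumes "subspace class_ring S (module_vec TYPE('a) n)"
  shows "vectorspace.dim class_ring ((module_vec TYPE('a) n)\<lparr>carrier := S\<rparr>) \<le> n"
proof -
  interpret vec_space "TYPE('a)" n .
  show ?thesis using subspace_dim[OF assms _ sub_fin_dim[OF assms]] dim_is_n by simp
qed

lemma sub_full:
  fixes S :: "'a::{finite,field} vec set"
  assumes sub: "subspace class_ring S (module_vec TYPE('a) n)"
    and d: "vectorspace.dim class_ring ((module_vec TYPE('a) n)\<lparr>carrier := S\<rparr>) = n"
  shows "S = carrier_vec n"
proof -
  interpret vec_space "TYPE('a)" n .
  interpret W: vectorspace class_ring "(module_vec TYPE('a) n)\<lparr>carrier := S\<rparr>"
    by (rule sub_vs[OF sub])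
  obtain B where B: "finite B" "W.basis B"
    using W.finite_basis_exists[OF sub_fin_dim[OF sub]] by blast
  have cB: "card B = n" using W.dim_basis[OF B] d by simp
  have subm: "submodule class_ring S (module_vec TYPE('a) n)" using sub unfolding subspace_def by auto
  have BS: "B \<subseteq> S" using B(2) unfolding W.basis_def by auto
  have li: "lin_indpt B"
    using B(2) span_li_not_depend(2)[OF BS subm] unfolding W.basis_def by auto
  have Bc: "B \<subseteq> carrier_vec n" using BS sub_carrier[OF sub] by auto
  have "basis B" by (rule dim_li_is_basis) (use B(1) Bc li cB dim_is_n in auto)
  hence "span B = carrier_vec n" unfolding basis_def by auto
  moreover have "span B \<subseteq> S" using span_is_subset[OF BS subm] .
  ultimately show ?thesis using sub_carrier[OF sub] by auto
qed

lemma lin_image: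
  fixes S :: "'a::{finite,field} vec set" and f :: "'a vec \<Rightarrow> 'a vec"
  assumes sub: "subspace class_ring S (module_vec TYPE('a) n)"
   and fS: "\<And>x. x \<in> S \<Longrightarrow> f x \<in> carrier_vec p"
   and add: "\<And>x y. x \<in> S \<Longrightarrow> y \<in> S \<Longrightarrow> f (x + y) = f x + f y"
   and sm: "\<And>a x. x \<in> S \<Longrightarrow> f (a \<cdot>\<^sub>v x) = a \<cdot>\<^sub>v f x"
   and inj: "inj_on f S"
  shows "subspace class_ring (f ` S) (module_vec TYPE('a) p)"
    "vectorspace.dim class_ring ((module_vec TYPE('a) p)\<lparr>carrier := f ` S\<rparr>)
     = vectorspace.dim class_ring ((module_vec TYPE('a) n)\<lparr>carrier := S\<rparr>)"
proof -
  interpret V: vectorspace class_ring "(module_vec TYPE('a) n)\<lparr>carrier := S\<rparr>"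
    by (rule sub_vs[OF sub])
  interpret W: vectorspace class_ring "module_vec TYPE('a) p" by (rule vec_vs)
  interpret L: linear_map class_ring "(module_vec TYPE('a) n)\<lparr>carrier := S\<rparr>" "module_vec TYPE('a) p" f
  proof (unfold_locales)
    show "f \<in> LinearCombinations.module_hom class_ring ((module_vec TYPE('a) n)\<lparr>carrier := S\<rparr>) (module_vec TYPE('a) p)"
      unfolding LinearCombinations.module_hom_def using fS add sm
      by (auto simp: module_vec_simps)
  qed
  have im: "L.imT = f ` S" unfolding L.im_def by simp
  show "subspace class_ring (f ` S) (module_vec TYPE('a) p)" using L.imT_is_subspace im by simp
  have k0: "vectorspace.dim class_ring (V.vs L.kerT) = 0"
    by (rule L.inj_imp_dim_ker0) (use inj in simp)
  from L.rank_nullity[OF sub_fin_dim[OF sub]] k0 im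
  show "vectorspace.dim class_ring ((module_vec TYPE('a) p)\<lparr>carrier := f ` S\<rparr>)
     = vectorspace.dim class_ring ((module_vec TYPE('a) n)\<lparr>carrier := S\<rparr>)" by simp
qed


lemma sub_add:
  fixes S :: "'a::field vec set"
  assumes "subspace class_ring S (module_vec TYPE('a) n)" "x \<in> S" "y \<in> S"
  shows "x + y \<in> S"
  using assms unfolding subspace_def submodule_def by (auto simp: module_vec_simps)

lemma sub_smult:
  fixes S :: "'a::field vec set"
  assumes "subspace class_ring S (module_vec TYPE('a) n)" "x \<in> S"
  shows "a \<cdot>\<^sub>v x \<in> S"
  using assms unfolding subspace_def submodule_def by (auto simp: module_vec_simps)

lemma sub_zero:
  fixes S :: "'a::field vec set"
  assumes "subspace class_ring S (module_vec TYPE('a) n)"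
  shows "0\<^sub>v n \<in> S"
  using assms unfolding subspace_def submodule_def by (auto simp: module_vec_simps)

lemma syst:
  fixes S :: "'a::{finite,field} vec set"
  assumes sub: "subspace class_ring S (module_vec TYPE('a) N)"
    and dS: "vectorspace.dim class_ring ((module_vec TYPE('a) N)\<lparr>carrier := S\<rparr>) = k"
    and kN: "k \<le> N"
    and inj: "\<And>x y. x \<in> S \<Longrightarrow> y \<in> S \<Longrightarrow> (\<forall>i<k. x $ i = y $ i) \<Longrightarrow> x = y"
  shows "\<exists>HM. HM \<in> carrier_mat (N - k) N \<and> {x \<in> carrier_vec N. HM *\<^sub>v x = 0\<^sub>v (N - k)} = S"
proof -
  have Sc: "S \<subseteq> carrier_vec N" by (rule sub_carrier[OF sub])
  define pi :: "'a vec \<Rightarrow> 'a vec" where "pi = (\<lambda>x. vec k (\<lambda>i. x $ i))"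
  have im: "subspace class_ring (pi ` S) (module_vec TYPE('a) k)"
    "vectorspace.dim class_ring ((module_vec TYPE('a) k)\<lparr>carrier := pi ` S\<rparr>) = k"
  proof -
    have a: "\<And>x y. x \<in> S \<Longrightarrow> y \<in> S \<Longrightarrow> pi (x + y) = pi x + pi y"
      unfolding pi_def using Sc kN by (intro eq_vecI) auto
    have b: "\<And>a x. x \<in> S \<Longrightarrow> pi (a \<cdot>\<^sub>v x) = a \<cdot>\<^sub>v pi x"
      unfolding pi_def using Sc kN by (intro eq_vecI) auto
    have c: "inj_on pi S"
    proof (rule inj_onI)
      fix x y assume "x \<in> S" "y \<in> S" "pi x = pi y"
      then show "x = y" using inj[of x y] unfolding pi_def
        by (metis index_vec)
    qed
    have d: "\<And>x. x \<in> S \<Longrightarrow> pi x \<in> carrier_vec k" unfolding pi_def by auto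
    from lin_image[OF sub d a b c] dS
    show "subspace class_ring (pi ` S) (module_vec TYPE('a) k)"
      "vectorspace.dim class_ring ((module_vec TYPE('a) k)\<lparr>carrier := pi ` S\<rparr>) = k" by auto
  qed
  have full: "pi ` S = carrier_vec k" by (rule sub_full[OF im])
  have "\<forall>j. \<exists>g. j < k \<longrightarrow> g \<in> S \<and> pi g = unit_vec k j"
  proof (intro allI)
    fix j
    show "\<exists>g. j < k \<longrightarrow> g \<in> S \<and> pi g = unit_vec k j"
    proof (cases "j < k")
      case True
      have "unit_vec k j \<in> pi ` S" using full by auto
      then show ?thesis by auto
    qed auto
  qed
  then obtain g where g: "\<And>j. j < k \<Longrightarrow> g j \<in> S \<and> pi (g j) = unit_vec k j"
    by metis
  have gS: "\<And>j. j < k \<Longrightarrow> g j \<in> S" using g by auto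
  have gc: "\<And>j. j < k \<Longrightarrow> g j \<in> carrier_vec N" using gS Sc by auto
  have gi: "\<And>j l. j < k \<Longrightarrow> l < k \<Longrightarrow> g j $ l = (if l = j then 1 else 0)"
  proof -
    fix j l assume jl: "j < k" "l < k"
    have "pi (g j) $ l = unit_vec k j $ l" using g jl by auto
    then show "g j $ l = (if l = j then 1 else 0)" unfolding pi_def using jl by auto
  qed
  define s :: "'a vec \<Rightarrow> nat \<Rightarrow> 'a vec" where
    "s = (\<lambda>x q. vec N (\<lambda>l. \<Sum>j<q. x $ j * g j $ l))"
  have sS: "\<And>x q. q \<le> k \<Longrightarrow> s x q \<in> S"
  proof -
    fix x q show "q \<le> k \<Longrightarrow> s x q \<in> S"
    proof (induction q)
      case 0
      have "s x 0 = 0\<^sub>v N" unfolding s_def by (intro eq_vecI) auto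
      then show ?case using sub_zero[OF sub] by simp
    next
      case (Suc q)
      have "s x (Suc q) = s x q + (x $ q) \<cdot>\<^sub>v g q"
        unfolding s_def using gc[of q] Suc.prems by (intro eq_vecI) auto
      then show ?case using Suc sub_add[OF sub] sub_smult[OF sub] gS[of q] by auto
    qed
  qed
  have slow: "\<And>x l. l < k \<Longrightarrow> s x k $ l = x $ l"
  proof -
    fix x l assume l: "l < k"
    have "s x k $ l = (\<Sum>j<k. x $ j * g j $ l)" unfolding s_def using l kN by simp
    also have "\<dots> = (\<Sum>j<k. if j = l then x $ j else 0)"
      by (rule sum.cong) (auto simp: gi l)
    also have "\<dots> = x $ l" using l by simp
    finally show "s x k $ l = x $ l" .
  qed
  define HM :: "'a mat" where
    "HM = mat (N - k) N (\<lambda>(a,l). if l < k then - (g l $ (a + k)) else if l = a + k then 1 else 0)"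
  have HMc: "HM \<in> carrier_mat (N - k) N" unfolding HM_def by auto
  have HMx: "\<And>x a. x \<in> carrier_vec N \<Longrightarrow> a < N - k \<Longrightarrow>
      (HM *\<^sub>v x) $ a = x $ (a + k) - (\<Sum>j<k. x $ j * g j $ (a + k))"
  proof -
    fix x :: "'a vec" and a assume x: "x \<in> carrier_vec N" and a: "a < N - k"
    have "(HM *\<^sub>v x) $ a = (\<Sum>l\<in>{0..<N}. HM $$ (a,l) * x $ l)"
      using x a HMc by (simp add: scalar_prod_def)
    also have "{0..<N} = {0..<k} \<union> {k..<N}" using kN by auto
    also have "(\<Sum>l\<in>{0..<k} \<union> {k..<N}. HM $$ (a,l) * x $ l)
        = (\<Sum>l\<in>{0..<k}. HM $$ (a,l) * x $ l) + (\<Sum>l\<in>{k..<N}. HM $$ (a,l) * x $ l)"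
      by (rule sum.union_disjoint) auto
    also have "(\<Sum>l\<in>{0..<k}. HM $$ (a,l) * x $ l) = (\<Sum>j<k. - (x $ j * g j $ (a + k)))"
      unfolding HM_def using a kN by (intro sum.cong) auto
    also have "(\<Sum>l\<in>{k..<N}. HM $$ (a,l) * x $ l) = (\<Sum>l\<in>{k..<N}. if l = a + k then x $ l else 0)"
      unfolding HM_def using a kN by (intro sum.cong) auto
    also have "\<dots> = x $ (a + k)" using a by simp
    finally show "(HM *\<^sub>v x) $ a = x $ (a + k) - (\<Sum>j<k. x $ j * g j $ (a + k))"
      by (simp add: sum_negf)
  qed
  have "{x \<in> carrier_vec N. HM *\<^sub>v x = 0\<^sub>v (N - k)} = S"
  proof (intro equalityI subsetI)
    fix x assume "x \<in> {x \<in> carrier_vec N. HM *\<^sub>v x = 0\<^sub>v (N - k)}"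
    then have x: "x \<in> carrier_vec N" and h: "HM *\<^sub>v x = 0\<^sub>v (N - k)" by auto
    have "x = s x k"
    proof (rule eq_vecI)
      show "dim_vec x = dim_vec (s x k)" using x unfolding s_def by simp
      fix l assume l: "l < dim_vec (s x k)"
      then have lN: "l < N" unfolding s_def by simp
      show "x $ l = s x k $ l"
      proof (cases "l < k")
        case True then show ?thesis using slow by simp
      next
        case False
        define a where "a = l - k"
        have a: "a < N - k" "l = a + k" using False lN unfolding a_def by auto
        have "(HM *\<^sub>v x) $ a = 0" using h a by simp
        then have "x $ l = (\<Sum>j<k. x $ j * g j $ l)" using HMx[OF x a(1)] a(2) by simp
        then show ?thesis unfolding s_def using lN by simp
      qed
    qed
    then show "x \<in> S" using sS[of k x] by simp
  next
    fix x assume xS: "x \<in> S"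
    have x: "x \<in> carrier_vec N" using xS Sc by auto
    have "s x k = x" by (rule inj[OF sS[OF order.refl] xS]) (simp add: slow)
    have "HM *\<^sub>v x = 0\<^sub>v (N - k)"
    proof (rule eq_vecI)
      show "dim_vec (HM *\<^sub>v x) = dim_vec (0\<^sub>v (N - k))" using HMc by simp
      fix a assume "a < dim_vec (0\<^sub>v (N - k))"
      then have a: "a < N - k" by simp
      have "x $ (a + k) = s x k $ (a + k)" using \<open>s x k = x\<close> by simp
      also have "\<dots> = (\<Sum>j<k. x $ j * g j $ (a + k))" unfolding s_def using a by simp
      finally show "(HM *\<^sub>v x) $ a = 0\<^sub>v (N - k) $ a" using HMx[OF x a] a by simp
    qed
    then show "x \<in> {x \<in> carrier_vec N. HM *\<^sub>v x = 0\<^sub>v (N - k)}" using x by simp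
  qed
  then show ?thesis using HMc by blast
qed


lemma split_sum:
  fixes f :: "nat \<Rightarrow> 'b::comm_monoid_add"
  assumes "m \<le> n"
  shows "(\<Sum>l\<in>{0..<n}. f l) = (\<Sum>l\<in>{0..<m}. f l) + (\<Sum>j\<in>{0..<n-m}. f (j+m))"
proof -
  have "(\<Sum>l\<in>{0..<n}. f l) = (\<Sum>l\<in>{0..<m}. f l) + (\<Sum>l\<in>{m..<n}. f l)"
    using assms by (simp add: sum.atLeastLessThan_concat)
  also have "(\<Sum>l\<in>{m..<n}. f l) = (\<Sum>j\<in>{0..<n-m}. f (j+m))"
    using sum.shift_bounds_nat_ivl[of f 0 m "n-m"] assms by simp
  finally show ?thesis .
qed
theorem theorem1:
  fixes C :: "'a::{finite,field} vec set"
    and n k r m :: nat and Rec L :: "nat \<Rightarrow> nat set" and e :: "nat \<Rightarrow> nat"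
  assumes code: "linear_code C n k"
    and k_pos: "1 \<le> k" and r_pos: "1 \<le> r"
    and loc: "locality_with C n r Rec m L"
    and opt: "optimal_LRC C n k r"
    and adm: "admissible_pattern m L e"
    and PMR: "\<exists>k'. MDS_code (puncture_first n m C) (n - m) k'"
    and order: "\<forall>i<m. e i = i"
  shows "\<exists>F HM.
     F \<in> carrier_mat m (n - m) \<and> HM \<in> carrier_mat (n - k - m) (n - m) \<and>
     parity_check (four_block_mat (1\<^sub>m m) F (0\<^sub>m (n - k - m) m) HM) n C \<and>
     MDS_code {x \<in> carrier_vec (n - m). HM *\<^sub>v x = 0\<^sub>v (n - k - m)} (n - m) ((n - m) - (n - k - m)) \<and>
     (\<forall>i<m. hweight (row F i) \<le> r)"
  proof -
  have subC: "subspace class_ring C (module_vec TYPE('a) n)"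
    and dimC: "vectorspace.dim class_ring ((module_vec TYPE('a) n)\<lparr>carrier := C\<rparr>) = k"
    using code unfolding linear_code_def by auto
  have Cc: "C \<subseteq> carrier_vec n" by (rule sub_carrier[OF subC])
  have recs: "\<And>i. i < n \<Longrightarrow> (\<exists>y \<in> dual_code n C. vsupp y = Rec i) \<and> card (Rec i) \<le> r + 1"
    and Limg: "L ` {..<m} = Rec ` {..<n}"
    using loc unfolding locality_with_def by auto
  have Ly: "\<And>i. i < m \<Longrightarrow> (\<exists>y \<in> dual_code n C. vsupp y = L i) \<and> card (L i) \<le> r + 1"
  proof -
    fix i assume "i < m"
    then have "L i \<in> Rec ` {..<n}" using Limg by auto
    then obtain j where "j < n" "L i = Rec j" by auto
    then show "(\<exists>y \<in> dual_code n C. vsupp y = L i) \<and> card (L i) \<le> r + 1" using recs by auto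
  qed
  have iL: "\<And>i. i < m \<Longrightarrow> i \<in> L i" using adm order unfolding admissible_pattern_def by auto
  have notL: "\<And>i j. i < m \<Longrightarrow> j < m \<Longrightarrow> j \<noteq> i \<Longrightarrow> j \<notin> L i"
  proof -
    fix i j assume "i < m" "j < m" "j \<noteq> i"
    then show "j \<notin> L i" using adm order unfolding admissible_pattern_def
      by (metis (no_types, lifting) DiffD2 DiffI UN_I lessThan_iff singletonD)
  qed
  have "\<forall>i. \<exists>y. i < m \<longrightarrow> y \<in> dual_code n C \<and> vsupp y = L i" using Ly by metis
  then obtain y where y: "\<And>i. i < m \<Longrightarrow> y i \<in> dual_code n C \<and> vsupp (y i) = L i" by metis
  have yc: "\<And>i. i < m \<Longrightarrow> y i \<in> carrier_vec n" using y unfolding dual_code_def by auto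
  have yC: "\<And>i c. i < m \<Longrightarrow> c \<in> C \<Longrightarrow> y i \<bullet> c = 0" using y unfolding dual_code_def by auto
  have Lsub: "\<And>i. i < m \<Longrightarrow> L i \<subseteq> {..<n}"
    using y yc unfolding vsupp_def by fastforce
  have ysupp: "\<And>i l. i < m \<Longrightarrow> l < n \<Longrightarrow> y i $ l \<noteq> 0 \<longleftrightarrow> l \<in> L i"
    using y yc unfolding vsupp_def by fastforce
  have finL: "\<And>i. i < m \<Longrightarrow> finite (L i)" using Lsub finite_subset by blast
  have mn: "m \<le> n"
  proof (cases m)
    case (Suc m')
    then have "m' \<in> L m'" using iL by auto
    then show ?thesis using Lsub[of m'] Suc by auto
  qed simp
  have iin: "\<And>i. i < m \<Longrightarrow> i < n" using mn by auto
  define z where "z = (\<lambda>i. inverse (y i $ i) \<cdot>\<^sub>v y i)"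
  have zc: "\<And>i. i < m \<Longrightarrow> z i \<in> carrier_vec n" unfolding z_def using yc by auto
  have yii: "\<And>i. i < m \<Longrightarrow> y i $ i \<noteq> 0" using ysupp iL iin by auto
  have zl: "\<And>i l. i < m \<Longrightarrow> l < n \<Longrightarrow> z i $ l = inverse (y i $ i) * y i $ l"
    unfolding z_def using yc by (metis carrier_vecD index_smult_vec(1))
  have zii: "\<And>i. i < m \<Longrightarrow> z i $ i = 1" using zl yii iin by auto
  have zsupp: "\<And>i l. i < m \<Longrightarrow> l < n \<Longrightarrow> z i $ l \<noteq> 0 \<longleftrightarrow> l \<in> L i"
  proof -
    fix i l assume i: "i < m" and l: "l < n"
    have "inverse (y i $ i) \<noteq> 0" using yii[OF i] by simp
    then show "z i $ l \<noteq> 0 \<longleftrightarrow> l \<in> L i" using zl[OF i l] ysupp[OF i l] by simp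
  qed
  have zlow: "\<And>i l. i < m \<Longrightarrow> l < m \<Longrightarrow> z i $ l = (if l = i then 1 else 0)"
  proof -
    fix i l assume i: "i < m" and l: "l < m"
    show "z i $ l = (if l = i then 1 else 0)"
    proof (cases "l = i")
      case True then show ?thesis using zii[OF i] by simp
    next
      case False
      then have "l \<notin> L i" using notL[OF i l] by simp
      then show ?thesis using zsupp[OF i, of l] l mn False by simp
    qed
  qed
  have zC: "\<And>i c. i < m \<Longrightarrow> c \<in> C \<Longrightarrow> z i \<bullet> c = 0"
  proof -
    fix i c assume "i < m" "c \<in> C"
    then show "z i \<bullet> c = 0" unfolding z_def using yC yc Cc
      by (subst smult_scalar_prod_distrib) auto
  qed
  define N where "N = n - m"
  define F :: "'a mat" where "F = mat m N (\<lambda>(i,j). z i $ (j + m))"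
  define P :: "'a vec \<Rightarrow> 'a vec" where "P = (\<lambda>c. vec N (\<lambda>j. c $ (j + m)))"
  have key: "\<And>i c. i < m \<Longrightarrow> c \<in> carrier_vec n \<Longrightarrow>
      z i \<bullet> c = c $ i + (\<Sum>j\<in>{0..<N}. z i $ (j + m) * c $ (j + m))"
  proof -
    fix i and c :: "'a vec" assume i: "i < m" and c: "c \<in> carrier_vec n"
    have "z i \<bullet> c = (\<Sum>l\<in>{0..<n}. z i $ l * c $ l)" using c by (simp add: scalar_prod_def)
    also have "\<dots> = (\<Sum>l\<in>{0..<m}. z i $ l * c $ l) + (\<Sum>j\<in>{0..<N}. z i $ (j + m) * c $ (j + m))"
      unfolding N_def by (rule split_sum[OF mn])
    also have "(\<Sum>l\<in>{0..<m}. z i $ l * c $ l) = (\<Sum>l\<in>{0..<m}. if l = i then c $ l else 0)"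
      by (rule sum.cong) (auto simp: zlow i)
    also have "\<dots> = c $ i" using i by simp
    finally show "z i \<bullet> c = c $ i + (\<Sum>j\<in>{0..<N}. z i $ (j + m) * c $ (j + m))" .
  qed
  have eqP: "\<And>c d. c \<in> carrier_vec n \<Longrightarrow> d \<in> carrier_vec n \<Longrightarrow> (\<forall>i<m. z i \<bullet> c = 0) \<Longrightarrow>
      (\<forall>i<m. z i \<bullet> d = 0) \<Longrightarrow> P c = P d \<Longrightarrow> c = d"
  proof -
    fix c d :: "'a vec" assume c: "c \<in> carrier_vec n" and d: "d \<in> carrier_vec n"
      and zc0: "\<forall>i<m. z i \<bullet> c = 0" and zd0: "\<forall>i<m. z i \<bullet> d = 0" and Pe: "P c = P d"
    have hi: "\<And>j. j < N \<Longrightarrow> c $ (j + m) = d $ (j + m)"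
    proof -
      fix j assume "j < N"
      then have "P c $ j = P d $ j" using Pe by simp
      then show "c $ (j + m) = d $ (j + m)" unfolding P_def using \<open>j < N\<close> by simp
    qed
    show "c = d"
    proof (rule eq_vecI)
      show "dim_vec c = dim_vec d" using c d by simp
      fix l assume "l < dim_vec d"
      then have l: "l < n" using d by simp
      show "c $ l = d $ l"
      proof (cases "l < m")
        case True
        have "c $ l = - (\<Sum>j\<in>{0..<N}. z l $ (j + m) * c $ (j + m))"
          using key[OF True c] zc0 True by (simp add: eq_neg_iff_add_eq_0)
        also have "\<dots> = - (\<Sum>j\<in>{0..<N}. z l $ (j + m) * d $ (j + m))"
          using hi by simp
        also have "\<dots> = d $ l"
        proof -
          have "d $ l + (\<Sum>j\<in>{0..<N}. z l $ (j + m) * d $ (j + m)) = 0"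
            using key[OF True d] zd0 True by simp
          then show ?thesis by (simp add: neg_eq_iff_add_eq_0 add.commute)
        qed
        finally show ?thesis .
      next
        case False
        then show ?thesis using hi[of "l - m"] l unfolding N_def by simp
      qed
    qed
  qed
  define C' where "C' = P ` C"
  have C'def: "puncture_first n m C = C'" unfolding C'_def P_def puncture_first_def N_def by simp
  have Pc: "\<And>c. P c \<in> carrier_vec N" unfolding P_def by simp
  have im: "subspace class_ring C' (module_vec TYPE('a) N)"
    "vectorspace.dim class_ring ((module_vec TYPE('a) N)\<lparr>carrier := C'\<rparr>) = k"
  proof -
    have a: "\<And>x y. x \<in> C \<Longrightarrow> y \<in> C \<Longrightarrow> P (x + y) = P x + P y"
      unfolding P_def using Cc unfolding N_def by (intro eq_vecI) auto
    have b: "\<And>a x. x \<in> C \<Longrightarrow> P (a \<cdot>\<^sub>v x) = a \<cdot>\<^sub>v P x"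
      unfolding P_def using Cc unfolding N_def by (intro eq_vecI) auto
    have c: "inj_on P C"
      by (rule inj_onI) (use eqP Cc zC in blast)
    from lin_image[OF subC _ a b c] dimC Pc
    show "subspace class_ring C' (module_vec TYPE('a) N)"
      "vectorspace.dim class_ring ((module_vec TYPE('a) N)\<lparr>carrier := C'\<rparr>) = k"
      unfolding C'_def by auto
  qed
  have C'c: "C' \<subseteq> carrier_vec N" by (rule sub_carrier[OF im(1)])
  have kN: "k \<le> N" using sub_dim_le[OF im(1)] im(2) by simp
  from PMR obtain k' where mds: "MDS_code C' N k'" using C'def unfolding N_def by auto
  then have "k' = k" using im(2) unfolding MDS_code_def linear_code_def by auto
  with mds have mdsk: "MDS_code C' N k" by simp
  have md: "min_dist C' = N - k + 1" using mdsk unfolding MDS_code_def by auto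
  have injpi: "\<And>x y. x \<in> C' \<Longrightarrow> y \<in> C' \<Longrightarrow> (\<forall>i<k. x $ i = y $ i) \<Longrightarrow> x = y"
  proof -
    fix x y assume xC: "x \<in> C'" and yC': "y \<in> C'" and ag: "\<forall>i<k. x $ i = y $ i"
    define w where "w = x + (-1) \<cdot>\<^sub>v y"
    have wC: "w \<in> C'" unfolding w_def using sub_add[OF im(1) xC sub_smult[OF im(1) yC']] .
    have xc: "x \<in> carrier_vec N" and ycc: "y \<in> carrier_vec N" using xC yC' C'c by auto
    have wc: "w \<in> carrier_vec N" unfolding w_def using xc ycc by auto
    have wi: "\<And>i. i < N \<Longrightarrow> w $ i = x $ i - y $ i" unfolding w_def using xc ycc by auto
    have "w = 0\<^sub>v N"
    proof (rule ccontr)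
      assume nz: "w \<noteq> 0\<^sub>v N"
      have "{i. i < dim_vec w \<and> w $ i \<noteq> 0} \<subseteq> {k..<N}"
      proof
        fix i assume "i \<in> {i. i < dim_vec w \<and> w $ i \<noteq> 0}"
        then have i: "i < N" "w $ i \<noteq> 0" using wc by auto
        show "i \<in> {k..<N}"
        proof (rule ccontr)
          assume "i \<notin> {k..<N}"
          then have "i < k" using i by auto
          then have "w $ i = 0" using wi[OF i(1)] ag by simp
          then show False using i by simp
        qed
      qed
      then have "hweight w \<le> N - k" unfolding hweight_def
        by (metis card_atLeastLessThan card_mono finite_atLeastLessThan)
      moreover have "min_dist C' \<le> hweight w"
      proof -
        have fin: "finite C'" using C'c finite_carrier_vec'[where n=N and 'a='a] finite_subset by blast
        have "hweight w \<in> hweight ` {c \<in> C'. c \<noteq> 0\<^sub>v (dim_vec c)}" using wC nz wc by auto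
        then show ?thesis unfolding min_dist_def using fin by (intro Min_le) auto
      qed
      ultimately show False using md by simp
    qed
    then have w0: "w = 0\<^sub>v N" .
    show "x = y"
    proof (rule eq_vecI)
      show "dim_vec x = dim_vec y" using xc ycc by simp
      fix i assume "i < dim_vec y"
      then have i: "i < N" using ycc by simp
      have "x $ i - y $ i = 0" using wi[OF i] w0 i by simp
      then show "x $ i = y $ i" by simp
    qed
  qed
  obtain HM where HM: "HM \<in> carrier_mat (N - k) N"
    and HMker: "{x \<in> carrier_vec N. HM *\<^sub>v x = 0\<^sub>v (N - k)} = C'"
    using syst[OF im kN injpi] by blast
  have NK: "n - k - m = N - k" unfolding N_def by simp
  define H where "H = four_block_mat (1\<^sub>m m) F (0\<^sub>m (n - k - m) m) HM"
  have Fc: "F \<in> carrier_mat m N" unfolding F_def by simp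
  have dH: "dim_row H = m + (N - k)" "dim_col H = n"
    unfolding H_def using HM Fc mn NK unfolding N_def by auto
  have Htop: "\<And>c i. c \<in> carrier_vec n \<Longrightarrow> i < m \<Longrightarrow> (H *\<^sub>v c) $ i = z i \<bullet> c"
  proof -
    fix c :: "'a vec" and i assume c: "c \<in> carrier_vec n" and i: "i < m"
    have "(H *\<^sub>v c) $ i = (\<Sum>l\<in>{0..<n}. H $$ (i,l) * c $ l)"
      using dH c i by (simp add: scalar_prod_def)
    also have "\<dots> = (\<Sum>l\<in>{0..<n}. z i $ l * c $ l)"
    proof (rule sum.cong)
      fix l assume "l \<in> {0..<n}"
      then have l: "l < n" by simp
      have "H $$ (i,l) = z i $ l"
      proof (cases "l < m")
        case True then show ?thesis unfolding H_def using i HM Fc zlow[OF i True] by auto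
      next
        case False then show ?thesis unfolding H_def F_def using i l HM mn unfolding N_def by auto
      qed
      then show "H $$ (i,l) * c $ l = z i $ l * c $ l" by simp
    qed simp
    also have "\<dots> = z i \<bullet> c" using c by (simp add: scalar_prod_def)
    finally show "(H *\<^sub>v c) $ i = z i \<bullet> c" .
  qed
  have Hbot: "\<And>c a. c \<in> carrier_vec n \<Longrightarrow> a < N - k \<Longrightarrow> (H *\<^sub>v c) $ (m + a) = (HM *\<^sub>v P c) $ a"
  proof -
    fix c :: "'a vec" and a assume c: "c \<in> carrier_vec n" and a: "a < N - k"
    have "(H *\<^sub>v c) $ (m + a) = (\<Sum>l\<in>{0..<n}. H $$ (m + a,l) * c $ l)"
      using dH c a by (simp add: scalar_prod_def)
    also have "\<dots> = (\<Sum>l\<in>{0..<m}. H $$ (m + a,l) * c $ l) + (\<Sum>j\<in>{0..<N}. H $$ (m + a, j + m) * c $ (j + m))"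
      unfolding N_def by (rule split_sum[OF mn])
    also have "(\<Sum>l\<in>{0..<m}. H $$ (m + a,l) * c $ l) = 0"
      by (rule sum.neutral) (use a HM Fc NK in \<open>auto simp: H_def\<close>)
    also have "(\<Sum>j\<in>{0..<N}. H $$ (m + a, j + m) * c $ (j + m)) = (\<Sum>j\<in>{0..<N}. HM $$ (a, j) * P c $ j)"
      by (rule sum.cong) (use a HM Fc NK in \<open>auto simp: H_def P_def\<close>)
    also have "\<dots> = (HM *\<^sub>v P c) $ a" using HM a by (simp add: scalar_prod_def P_def)
    finally show "(H *\<^sub>v c) $ (m + a) = (HM *\<^sub>v P c) $ a" by simp
  qed
  have par: "parity_check H n C"
    unfolding parity_check_def
  proof (intro conjI dH(2) equalityI subsetI)
    fix c assume cC: "c \<in> C"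
    have c: "c \<in> carrier_vec n" using cC Cc by auto
    have "P c \<in> C'" unfolding C'_def using cC by auto
    then have hm0: "HM *\<^sub>v P c = 0\<^sub>v (N - k)" using HMker by auto
    have "H *\<^sub>v c = 0\<^sub>v (dim_row H)"
    proof (rule eq_vecI)
      show "dim_vec (H *\<^sub>v c) = dim_vec (0\<^sub>v (dim_row H))" by simp
      fix i assume "i < dim_vec (0\<^sub>v (dim_row H))"
      then have i: "i < m + (N - k)" using dH by simp
      show "(H *\<^sub>v c) $ i = 0\<^sub>v (dim_row H) $ i"
      proof (cases "i < m")
        case True then show ?thesis using Htop[OF c True] zC[OF True cC] i dH by simp
      next
        case False
        then obtain a where a: "i = m + a" "a < N - k" using i by (metis add_less_cancel_left le_add_diff_inverse not_less)
        then show ?thesis using Hbot[OF c a(2)] hm0 i dH by simp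
      qed
    qed
    then show "c \<in> {c \<in> carrier_vec n. H *\<^sub>v c = 0\<^sub>v (dim_row H)}" using c by simp
  next
    fix c assume "c \<in> {c \<in> carrier_vec n. H *\<^sub>v c = 0\<^sub>v (dim_row H)}"
    then have c: "c \<in> carrier_vec n" and h: "H *\<^sub>v c = 0\<^sub>v (dim_row H)" by auto
    have ztop: "\<forall>i<m. z i \<bullet> c = 0"
    proof (intro allI impI)
      fix i assume i: "i < m"
      have "(H *\<^sub>v c) $ i = 0" using h i dH by simp
      then show "z i \<bullet> c = 0" using Htop[OF c i] by simp
    qed
    have "HM *\<^sub>v P c = 0\<^sub>v (N - k)"
    proof (rule eq_vecI)
      show "dim_vec (HM *\<^sub>v P c) = dim_vec (0\<^sub>v (N - k))" using HM by simp
      fix a assume "a < dim_vec (0\<^sub>v (N - k))"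
      then have a: "a < N - k" by simp
      have "(H *\<^sub>v c) $ (m + a) = 0" using h a dH by simp
      then show "(HM *\<^sub>v P c) $ a = 0\<^sub>v (N - k) $ a" using Hbot[OF c a] a by simp
    qed
    then have "P c \<in> C'" using HMker Pc by auto
    then obtain d where dC: "d \<in> C" and Pd: "P c = P d" unfolding C'_def by auto
    have "c = d" by (rule eqP[OF c _ ztop _ Pd]) (use dC Cc zC in auto)
    then show "c \<in> C" using dC by simp
  qed
  have wt: "\<forall>i<m. hweight (row F i) \<le> r"
  proof (intro allI impI)
    fix i assume i: "i < m"
    have "row F i = vec N (\<lambda>j. z i $ (j + m))" unfolding F_def using i by (intro eq_vecI) auto
    then have "hweight (row F i) = card {j. j < N \<and> z i $ (j + m) \<noteq> 0}" unfolding hweight_def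
      by (metis (no_types, lifting) dim_vec index_vec)
    also have "\<dots> = card ((\<lambda>j. j + m) ` {j. j < N \<and> z i $ (j + m) \<noteq> 0})"
      by (rule card_image[symmetric]) (auto simp: inj_on_def)
    also have "\<dots> \<le> card (L i - {i})"
    proof (rule card_mono)
      show "finite (L i - {i})" using finL[OF i] by simp
      show "(\<lambda>j. j + m) ` {j. j < N \<and> z i $ (j + m) \<noteq> 0} \<subseteq> L i - {i}"
        using zsupp[OF i] i unfolding N_def by auto
    qed
    also have "\<dots> = card (L i) - 1" using finL[OF i] iL[OF i] by simp
    also have "\<dots> \<le> r" using Ly[OF i] by linarith
    finally show "hweight (row F i) \<le> r" .
  qed
  have mdsH: "MDS_code {x \<in> carrier_vec (n - m). HM *\<^sub>v x = 0\<^sub>v (n - k - m)} (n - m) ((n - m) - (n - k - m))"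
  proof -
    have "(n - m) - (n - k - m) = k" using kN unfolding N_def by simp
    then show ?thesis using mdsk HMker NK unfolding N_def by simp
  qed
  show ?thesis
    apply (rule exI[of _ F], rule exI[of _ HM])
    using Fc HM NK par wt mdsH unfolding H_def N_def by auto
qed

end
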